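(* Let $k$ be a field and let $G$ be an infinite group. Then for every integer $n \geq 1$ there exists a canonical ring isomorphism $\mathrm{LNUCA}_{c}(G, k^n)\simeq M_n(D^1(k[G]))$.
   Context: Configurations and shift: for a set $A$ and a group $G$, $A^G$ is the set of maps $G\to A$; for $g\in G$, $x\in A^G$ set $(gx)(h)=x(g^{-1}h)$, so $(g^{-1}x)(h)=x(gh)$. For a subset $M\subset G$, a set $S$ of maps $A^M\to A$ and $s\in S^G$, the non-uniform cellular automaton (NUCA) $\sigma_s\colon A^G\to A^G$ is $\sigma_s(x)(g)=s(g)\big((g^{-1}x)\vert_M\big)$; $M$ is its memory. For a vector space $V$ over a field $k$, $\mathrm{LNUCA}_c(G,V)$ denotes the set of maps $\tau\colon V^G\to V^G$ such that $\tau=\sigma_s$ for some finite $M\subset G$ and some $s\in \mathcal{L}(V^M,V)^G$ ($k$-linear maps) for which there is a finite $E\subset G$ with $s(g)=s(h)$ for all $g,h\in G\setminus E$. It is a ring under pointwise addition and composition of maps. For a ring $R$ and group $G$, $R[G]$ is the group ring; $(R[G])[G]$ denotes the set of finitely supported maps $\beta\colon G\to R[G]$, written $g\mapsto\beta(g)$, with $\beta(g)(h)\in R$. The ring $D^1(R[G])$ is the set $R[G]\times (R[G])[G]$ with componentwise addition and multiplication $(\alpha_1,\beta_1)*(\alpha_2,\beta_2)=(\alpha_1\alpha_2,\ \alpha_1\beta_2+\beta_1\alpha_2+\beta_1\beta_2)$, where $\alpha_1\alpha_2$ is the group ring product and, for $\alpha\in R[G]$, $\beta,\gamma\in (R[G])[G]$,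 $g,h\in G$, the twisted products are $(\alpha\beta)(g)(h)=\sum_{t\in G}\alpha(t)\beta(gt)(t^{-1}h)$, $(\beta\alpha)(g)(h)=\sum_{t\in G}\beta(g)(t)\alpha(t^{-1}h)$, $(\beta\gamma)(g)(h)=\sum_{t\in G}\beta(g)(t)\gamma(gt)(t^{-1}h)$. $M_n(\cdot)$ denotes the ring of $n\times n$ matrices. *)

theory Defs
  imports Main "HOL-Library.Groups_Big_Fun" "HOL-Library.Product_Plus" "HOL-Library.Function_Algebras"
begin

text \<open>The group G is a type 'g of class group_add (written additively, NOT assumed
commutative): g^{-1} is -g, gh is g + h.
The space k^n is modelled as 'n => 'k for a finite index type 'n with CARD('n) = n.\<close>

text \<open>V^M is modelled as the maps y :: 'g => V that vanish outside M.
 lin_on M f: f is k-linear on V^M.\<close>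
definition lin_on :: "'g set \<Rightarrow> (('g \<Rightarrow> 'n \<Rightarrow> 'k::field) \<Rightarrow> ('n \<Rightarrow> 'k)) \<Rightarrow> bool" where
  "lin_on M f \<longleftrightarrow>
     (\<forall>x y. (\<forall>h. h \<notin> M \<longrightarrow> x h = 0) \<longrightarrow> (\<forall>h. h \<notin> M \<longrightarrow> y h = 0) \<longrightarrow>
        f (x + y) = f x + f y) \<and>
     (\<forall>c x. (\<forall>h. h \<notin> M \<longrightarrow> x h = 0) \<longrightarrow>
        f (\<lambda>h i. c * x h i) = (\<lambda>i. c * f x i))"

text \<open>sigma_s(x)(g) = s(g)((g^{-1} x)|_M), where (g^{-1}x)(h) = x(gh).\<close>
definition nuca :: "'g::group_add set \<Rightarrow> ('g \<Rightarrow> (('g \<Rightarrow> 'v::zero) \<Rightarrow> 'v))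
     \<Rightarrow> ('g \<Rightarrow> 'v) \<Rightarrow> ('g \<Rightarrow> 'v)" where
  "nuca M s x = (\<lambda>g. s g (\<lambda>h. if h \<in> M then x (g + h) else 0))"

definition LNUCA_c :: "(('g::group_add \<Rightarrow> 'n::finite \<Rightarrow> 'k::field) \<Rightarrow> ('g \<Rightarrow> 'n \<Rightarrow> 'k)) set" where
  "LNUCA_c = {\<tau>. \<exists>M s E. finite M \<and> (\<forall>g. lin_on M (s g)) \<and> finite E \<and>
        (\<forall>g h. g \<notin> E \<longrightarrow> h \<notin> E \<longrightarrow> s g = s h) \<and> \<tau> = nuca M s}"

text \<open>Ring operations on LNUCA_c: pointwise addition (the function-space (+)) and
  composition (o); unit id.\<close>

definition fin_supp :: "('a \<Rightarrow> 'b::zero) \<Rightarrow> bool" where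
  "fin_supp f \<longleftrightarrow> finite {a. f a \<noteq> 0}"

text \<open>k[G] as finitely supported maps; (k[G])[G] as finitely supported maps G => k[G].\<close>
definition groupring :: "('g \<Rightarrow> 'k::field) set" where
  "groupring = {\<alpha>. fin_supp \<alpha>}"

definition groupring2 :: "('g \<Rightarrow> 'g \<Rightarrow> 'k::field) set" where
  "groupring2 = {\<beta>. fin_supp \<beta> \<and> (\<forall>g. fin_supp (\<beta> g))}"

definition D1 :: "(('g \<Rightarrow> 'k::field) \<times> ('g \<Rightarrow> 'g \<Rightarrow> 'k)) set" where
  "D1 = groupring \<times> groupring2"

text \<open>Group ring product and the three twisted products (sums over G are finite
  sums over the support, via Sum_any).\<close>
definition gr_mul :: "('g::group_add \<Rightarrow> 'k::field) \<Rightarrow> ('g \<Rightarrow> 'k) \<Rightarrow> ('g \<Rightarrow> 'k)" where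
  "gr_mul a b = (\<lambda>h. \<Sum>t. a t * b (- t + h))"

definition tw_lr :: "('g::group_add \<Rightarrow> 'k::field) \<Rightarrow> ('g \<Rightarrow> 'g \<Rightarrow> 'k) \<Rightarrow> ('g \<Rightarrow> 'g \<Rightarrow> 'k)" where
  "tw_lr a b = (\<lambda>g h. \<Sum>t. a t * b (g + t) (- t + h))"

definition tw_rl :: "('g::group_add \<Rightarrow> 'g \<Rightarrow> 'k::field) \<Rightarrow> ('g \<Rightarrow> 'k) \<Rightarrow> ('g \<Rightarrow> 'g \<Rightarrow> 'k)" where
  "tw_rl b a = (\<lambda>g h. \<Sum>t. b g t * a (- t + h))"

definition tw_rr :: "('g::group_add \<Rightarrow> 'g \<Rightarrow> 'k::field) \<Rightarrow> ('g \<Rightarrow> 'g \<Rightarrow> 'k) \<Rightarrow> ('g \<Rightarrow> 'g \<Rightarrow> 'k)" where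
  "tw_rr b c = (\<lambda>g h. \<Sum>t. b g t * c (g + t) (- t + h))"

text \<open>Addition on D^1 is componentwise: the (+) of pairs from Product_Plus.\<close>
definition d1_mul :: "('g::group_add \<Rightarrow> 'k::field) \<times> ('g \<Rightarrow> 'g \<Rightarrow> 'k)
     \<Rightarrow> ('g \<Rightarrow> 'k) \<times> ('g \<Rightarrow> 'g \<Rightarrow> 'k) \<Rightarrow> ('g \<Rightarrow> 'k) \<times> ('g \<Rightarrow> 'g \<Rightarrow> 'k)" where
  "d1_mul x y = (case x of (a1, b1) \<Rightarrow> case y of (a2, b2) \<Rightarrow>
      (gr_mul a1 a2, tw_lr a1 b2 + tw_rl b1 a2 + tw_rr b1 b2))"

definition d1_one :: "('g::group_add \<Rightarrow> 'k::field) \<times> ('g \<Rightarrow> 'g \<Rightarrow> 'k)" where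
  "d1_one = ((\<lambda>g. if g = 0 then 1 else 0), 0)"

definition MatD1 :: "('n::finite \<Rightarrow> 'n \<Rightarrow> ('g::group_add \<Rightarrow> 'k::field) \<times> ('g \<Rightarrow> 'g \<Rightarrow> 'k)) set" where
  "MatD1 = {A. \<forall>i j. A i j \<in> D1}"

text \<open>Matrix addition is entrywise: the function-space (+).\<close>
definition mat_mul :: "('n::finite \<Rightarrow> 'n \<Rightarrow> ('g::group_add \<Rightarrow> 'k::field) \<times> ('g \<Rightarrow> 'g \<Rightarrow> 'k))
   \<Rightarrow> ('n \<Rightarrow> 'n \<Rightarrow> ('g \<Rightarrow> 'k) \<times> ('g \<Rightarrow> 'g \<Rightarrow> 'k)) \<Rightarrow> ('n \<Rightarrow> 'n \<Rightarrow> ('g \<Rightarrow> 'k) \<times> ('g \<Rightarrow> 'g \<Rightarrow> 'k))" where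
  "mat_mul A B = (\<lambda>i j. \<Sum>l\<in>UNIV. d1_mul (A i l) (B l j))"

definition mat_one :: "'n::finite \<Rightarrow> 'n \<Rightarrow> ('g::group_add \<Rightarrow> 'k::field) \<times> ('g \<Rightarrow> 'g \<Rightarrow> 'k)" where
  "mat_one = (\<lambda>i j. if i = j then d1_one else 0)"

end

theory Submission
  imports Defs
begin


lemma sum_fun_app: "(\<Sum>a\<in>A. f a) x = (\<Sum>a\<in>A. f a x)"
  by (induction A rule: infinite_finite_induct) auto

definition coef :: "(('g::group_add \<Rightarrow> 'n::finite \<Rightarrow> 'k::field) \<Rightarrow> ('g \<Rightarrow> 'n \<Rightarrow> 'k)) \<Rightarrow> 'g \<Rightarrow> 'g \<Rightarrow> 'n \<Rightarrow> 'n \<Rightarrow> 'k" where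
  "coef \<tau> g h i j = \<tau> (\<lambda>p l. if p = g + h \<and> l = j then 1 else 0) g i"

definition Sc :: "('g \<Rightarrow> 'g \<Rightarrow> 'n \<Rightarrow> 'n \<Rightarrow> 'k::zero) \<Rightarrow> 'g set" where
  "Sc c = {h. \<exists>g i j. c g h i j \<noteq> 0}"

definition good :: "('g \<Rightarrow> 'g \<Rightarrow> 'n \<Rightarrow> 'n \<Rightarrow> 'k::zero) \<Rightarrow> bool" where
  "good c \<longleftrightarrow> finite (Sc c) \<and> (\<exists>E. finite E \<and> (\<forall>g g'. g \<notin> E \<longrightarrow> g' \<notin> E \<longrightarrow> c g = c g'))"

definition opH :: "'g set \<Rightarrow> ('g::group_add \<Rightarrow> 'g \<Rightarrow> 'n::finite \<Rightarrow> 'n \<Rightarrow> 'k::field) \<Rightarrow> ('g \<Rightarrow> 'n \<Rightarrow> 'k) \<Rightarrow> ('g \<Rightarrow> 'n \<Rightarrow> 'k)" where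
  "opH H c x = (\<lambda>g i. \<Sum>h\<in>H. \<Sum>j\<in>UNIV. c g h i j * x (g + h) j)"

definition opc where "opc c = opH (Sc c) c"

definition cof :: "('g \<Rightarrow> 'a) \<Rightarrow> 'a" where
  "cof f = (THE v. finite {g. f g \<noteq> v})"

definition Psi :: "('g::group_add \<Rightarrow> 'g \<Rightarrow> 'n::finite \<Rightarrow> 'n \<Rightarrow> 'k::field) \<Rightarrow> 'n \<Rightarrow> 'n \<Rightarrow> ('g \<Rightarrow> 'k) \<times> ('g \<Rightarrow> 'g \<Rightarrow> 'k)" where
  "Psi c = (\<lambda>i j. ((\<lambda>h. cof c h i j), (\<lambda>g h. c g h i j - cof c h i j)))"

definition cmp :: "('g::group_add \<Rightarrow> 'g \<Rightarrow> 'n::finite \<Rightarrow> 'n \<Rightarrow> 'k::field) \<Rightarrow> ('g \<Rightarrow> 'g \<Rightarrow> 'n \<Rightarrow> 'n \<Rightarrow> 'k) \<Rightarrow> ('g \<Rightarrow> 'g \<Rightarrow> 'n \<Rightarrow> 'n \<Rightarrow> 'k)" where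
  "cmp c d = (\<lambda>g h i j. \<Sum>t\<in>Sc c. \<Sum>l\<in>UNIV. c g t i l * d (g + t) (- t + h) l j)"

lemma notin_Sc: "h \<notin> Sc c \<Longrightarrow> c g h i j = 0"
  by (auto simp: Sc_def)

lemma opH_eq:
  assumes "finite H" "Sc c \<subseteq> H"
  shows "opH H c = opc c"
proof (intro ext)
  fix x g i
  show "opH H c x g i = opc c x g i"
    unfolding opc_def opH_def
    by (rule sum.mono_neutral_right) (use assms in \<open>auto simp: notin_Sc\<close>)
qed

lemma coef_opc:
  assumes "finite (Sc c)"
  shows "coef (opc c) = c"
proof (intro ext)
  fix g h i j
  have "coef (opc c) g h i j = (\<Sum>h'\<in>Sc c. \<Sum>j'\<in>UNIV. c g h' i j' * (if h' = h \<and> j' = j then 1 else 0))"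
    by (simp add: coef_def opc_def opH_def)
  also have "\<dots> = (\<Sum>h'\<in>Sc c. if h' = h then c g h' i j else 0)"
    by (rule sum.cong) (auto simp: if_distrib cong: if_cong)
  also have "\<dots> = c g h i j"
    using assms by (auto simp: notin_Sc)
  finally show "coef (opc c) g h i j = c g h i j" .
qed

lemma cof_eq:
  assumes inf: "infinite (UNIV :: 'g set)" and fin: "finite {g::'g. f g \<noteq> v}"
  shows "cof f = v"
  unfolding cof_def
proof (rule the_equality)
  show "finite {g. f g \<noteq> v}" by fact
next
  fix w assume w: "finite {g. f g \<noteq> w}"
  have "finite ({g. f g \<noteq> v} \<union> {g. f g \<noteq> w})" using fin w by simp
  then obtain g where "g \<notin> {g. f g \<noteq> v} \<union> {g. f g \<noteq> w}"
    using inf by (metis ex_new_if_finite)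
  then show "w = v" by auto
qed

lemma good_cof:
  assumes inf: "infinite (UNIV :: 'g set)" and "good (c :: 'g \<Rightarrow> _)"
  shows "finite {g. c g \<noteq> cof c}"
proof -
  obtain E where E: "finite E" "\<And>g g'. g \<notin> E \<Longrightarrow> g' \<notin> E \<Longrightarrow> c g = c g'"
    using assms(2) unfolding good_def by blast
  obtain g0 where g0: "g0 \<notin> E" using inf E(1) by (metis ex_new_if_finite)
  have sub: "{g. c g \<noteq> c g0} \<subseteq> E" using E g0 by blast
  hence fin: "finite {g. c g \<noteq> c g0}" using E(1) finite_subset by blast
  have "cof c = c g0" by (rule cof_eq[OF inf fin])
  with fin show ?thesis by simp
qed

definition supp_on :: "'g set \<Rightarrow> ('g \<Rightarrow> 'n \<Rightarrow> 'k::zero) \<Rightarrow> bool" where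
  "supp_on M y \<longleftrightarrow> (\<forall>h. h \<notin> M \<longrightarrow> y h = 0)"

lemma lin_zero:
  fixes f :: "('g \<Rightarrow> 'n \<Rightarrow> 'k::field) \<Rightarrow> ('n \<Rightarrow> 'k)"
  shows "lin_on M f \<Longrightarrow> f 0 = 0"
proof -
  assume "lin_on M f"
  then have L: "\<forall>c x. (\<forall>h. h \<notin> M \<longrightarrow> x h = 0) \<longrightarrow> f (\<lambda>h i. c * x h i) = (\<lambda>i. c * f x i)"
    unfolding lin_on_def by blast
  have "f (\<lambda>h i. 0 * (0::'g \<Rightarrow> 'n \<Rightarrow> 'k) h i) = (\<lambda>i. 0 * f 0 i)"
    by (rule L[rule_format]) (simp add: zero_fun_def)
  moreover have "(\<lambda>h i. (0::'k) * (0::'g \<Rightarrow> 'n \<Rightarrow> 'k) h i) = 0" by (simp add: fun_eq_iff)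
  moreover have "(\<lambda>i. (0::'k) * f 0 i) = 0" by (simp add: fun_eq_iff)
  ultimately show ?thesis by simp
qed

lemma lin_sum:
  assumes lin: "lin_on M f" and "finite A" and "\<forall>a\<in>A. supp_on M (y a)"
  shows "f (\<Sum>a\<in>A. y a) = (\<Sum>a\<in>A. f (y a))"
  using assms(2,3)
proof (induction A rule: finite_induct)
  case empty then show ?case using lin_zero[OF lin] by (simp only: sum.empty)
next
  case (insert a A)
  have add: "\<And>x y. supp_on M x \<Longrightarrow> supp_on M y \<Longrightarrow> f (x + y) = f x + f y"
    using lin unfolding lin_on_def supp_on_def by blast
  have s: "supp_on M (\<Sum>a\<in>A. y a)"
    unfolding supp_on_def
  proof (intro allI impI)
    fix h assume h: "h \<notin> M"
    have "(\<Sum>a\<in>A. y a) h = (\<Sum>a\<in>A. y a h)" by (rule sum_fun_app)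
    also have "\<dots> = (\<Sum>a\<in>A. 0)" using insert.prems h by (intro sum.cong refl) (auto simp: supp_on_def)
    finally show "(\<Sum>a\<in>A. y a) h = 0" by simp
  qed
  have ya: "supp_on M (y a)" and yA: "\<forall>a\<in>A. supp_on M (y a)" using insert.prems by auto
  have "f (\<Sum>a\<in>insert a A. y a) = f (y a + (\<Sum>a\<in>A. y a))" by (simp add: insert.hyps)
  also have "\<dots> = f (y a) + f (\<Sum>a\<in>A. y a)" by (rule add[OF ya s])
  also have "\<dots> = f (y a) + (\<Sum>a\<in>A. f (y a))" using insert.IH[OF yA] by (simp only:)
  also have "\<dots> = (\<Sum>a\<in>insert a A. f (y a))" by (simp add: insert.hyps)
  finally show ?case .
qed

definition ee :: "'g \<Rightarrow> 'n \<Rightarrow> 'g \<Rightarrow> 'n \<Rightarrow> 'k::field" where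
  "ee h j = (\<lambda>p l. if p = h \<and> l = j then 1 else 0)"

lemma lin_expand:
  assumes lin: "lin_on M f" and fin: "finite M" and y: "supp_on M (y :: 'g \<Rightarrow> 'n::finite \<Rightarrow> 'k::field)"
  shows "f y i = (\<Sum>h\<in>M. \<Sum>j\<in>UNIV. y h j * f (ee h j) i)"
proof -
  have yeq: "y = (\<Sum>hj\<in>M \<times> UNIV. (\<lambda>p l. y (fst hj) (snd hj) * ee (fst hj) (snd hj) p l))"
  proof (intro ext)
    fix p l
    have "(\<Sum>hj\<in>M \<times> UNIV. (\<lambda>p l. y (fst hj) (snd hj) * ee (fst hj) (snd hj) p l)) p l
       = (\<Sum>h\<in>M. \<Sum>j\<in>UNIV. y h j * ee h j p l)"
      by (simp add: sum_fun_app sum.cartesian_product case_prod_beta)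
    also have "\<dots> = (\<Sum>h\<in>M. if h = p then y h l else 0)"
      by (rule sum.cong) (auto simp: ee_def if_distrib cong: if_cong)
    also have "\<dots> = y p l" using fin y by (auto simp: supp_on_def)
    finally show "y p l = (\<Sum>hj\<in>M \<times> UNIV. (\<lambda>p l. y (fst hj) (snd hj) * ee (fst hj) (snd hj) p l)) p l" by simp
  qed
  have sup: "\<forall>a\<in>M \<times> UNIV. supp_on M (\<lambda>p l. y (fst a) (snd a) * ee (fst a) (snd a) p l)"
    by (auto simp: supp_on_def ee_def fun_eq_iff)
  have "f y = (\<Sum>hj\<in>M \<times> UNIV. f (\<lambda>p l. y (fst hj) (snd hj) * ee (fst hj) (snd hj) p l))"
    by (subst yeq, rule lin_sum[OF lin]) (use fin sup in auto)
  also have "\<dots> = (\<Sum>hj\<in>M \<times> UNIV. (\<lambda>i. y (fst hj) (snd hj) * f (ee (fst hj) (snd hj)) i))"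
  proof (rule sum.cong)
    fix hj assume "hj \<in> M \<times> (UNIV::'n set)"
    then have "supp_on M (ee (fst hj) (snd hj) :: 'g \<Rightarrow> 'n \<Rightarrow> 'k)"
      by (auto simp: supp_on_def ee_def fun_eq_iff)
    then show "f (\<lambda>p l. y (fst hj) (snd hj) * ee (fst hj) (snd hj) p l) = (\<lambda>i. y (fst hj) (snd hj) * f (ee (fst hj) (snd hj)) i)"
      using lin unfolding lin_on_def supp_on_def by blast
  qed simp
  finally have "f y i = (\<Sum>hj\<in>M \<times> UNIV. y (fst hj) (snd hj) * f (ee (fst hj) (snd hj)) i)"
    by (simp only: sum_fun_app)
  then show ?thesis unfolding sum.cartesian_product by (simp add: case_prod_beta)
qed



lemma LNUCA_rep:
  assumes "\<tau> \<in> (LNUCA_c :: (('g::group_add \<Rightarrow> 'n::finite \<Rightarrow> 'k::field) \<Rightarrow> ('g \<Rightarrow> 'n \<Rightarrow> 'k)) set)"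
  shows "good (coef \<tau>) \<and> \<tau> = opc (coef \<tau>)"
proof -
  obtain M s E where M: "finite M" and lin: "\<And>g. lin_on M (s g)" and E: "finite E"
    and sE: "\<And>g h. g \<notin> E \<Longrightarrow> h \<notin> E \<Longrightarrow> s g = s h" and tau: "\<tau> = nuca M s"
    using assms unfolding LNUCA_c_def by blast
  have cf: "coef \<tau> g h i j = (if h \<in> M then s g (ee h j) i else 0)" for g h i j
  proof (cases "h \<in> M")
    case True
    have "(\<lambda>h'. if h' \<in> M then (\<lambda>l. if g + h' = g + h \<and> l = j then 1 else 0) else 0) = (ee h j :: 'g \<Rightarrow> 'n \<Rightarrow> 'k)"
      using True by (auto simp: ee_def fun_eq_iff)
    then show ?thesis using True by (simp add: coef_def tau nuca_def)
  next
    case False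
    have "(\<lambda>h'. if h' \<in> M then (\<lambda>l. if g + h' = g + h \<and> l = j then 1 else 0) else 0) = (0 :: 'g \<Rightarrow> 'n \<Rightarrow> 'k)"
      using False by (auto simp: fun_eq_iff)
    then show ?thesis using False lin_zero[OF lin[of g]] by (simp add: coef_def tau nuca_def)
  qed
  have ScM: "Sc (coef \<tau>) \<subseteq> M" by (auto simp: Sc_def cf split: if_splits)
  have good: "good (coef \<tau>)"
    unfolding good_def
  proof
    show "finite (Sc (coef \<tau>))" using ScM M finite_subset by blast
    show "\<exists>E. finite E \<and> (\<forall>g g'. g \<notin> E \<longrightarrow> g' \<notin> E \<longrightarrow> coef \<tau> g = coef \<tau> g')"
    proof (intro exI[of _ E] conjI allI impI)
      show "finite E" by fact
      fix g g' assume "g \<notin> E" "g' \<notin> E"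
      then have "s g = s g'" by (rule sE)
      then show "coef \<tau> g = coef \<tau> g'" by (simp add: fun_eq_iff cf)
    qed
  qed
  have "\<tau> = opH M (coef \<tau>)"
  proof (intro ext)
    fix x g i
    have "\<tau> x g i = s g (\<lambda>h. if h \<in> M then x (g + h) else 0) i" by (simp add: tau nuca_def)
    also have "\<dots> = (\<Sum>h\<in>M. \<Sum>j\<in>UNIV. (if h \<in> M then x (g + h) else 0) j * s g (ee h j) i)"
      by (rule lin_expand[OF lin M]) (auto simp: supp_on_def)
    also have "\<dots> = opH M (coef \<tau>) x g i"
      unfolding opH_def by (intro sum.cong refl) (simp add: cf mult.commute)
    finally show "\<tau> x g i = opH M (coef \<tau>) x g i" .
  qed
  also have "\<dots> = opc (coef \<tau>)" by (rule opH_eq[OF M ScM])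
  finally have eq: "\<tau> = opc (coef \<tau>)" .
  show ?thesis by (rule conjI[OF good eq])
qed

lemma opc_LNUCA:
  assumes "good (c :: 'g::group_add \<Rightarrow> 'g \<Rightarrow> 'n::finite \<Rightarrow> 'n \<Rightarrow> 'k::field)"
  shows "opc c \<in> LNUCA_c"
proof -
  obtain E where E: "finite E" "\<And>g g'. g \<notin> E \<Longrightarrow> g' \<notin> E \<Longrightarrow> c g = c g'"
    using assms unfolding good_def by blast
  define s where "s g y = (\<lambda>i. \<Sum>h\<in>Sc c. \<Sum>j\<in>UNIV. c g h i j * y h j)" for g and y :: "'g \<Rightarrow> 'n \<Rightarrow> 'k"
  have lin: "lin_on (Sc c) (s g)" for g
    unfolding lin_on_def s_def
  proof (intro conjI allI impI)
    fix x y :: "'g \<Rightarrow> 'n \<Rightarrow> 'k"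
    show "(\<lambda>i. \<Sum>h\<in>Sc c. \<Sum>j\<in>UNIV. c g h i j * (x + y) h j) =
      (\<lambda>i. \<Sum>h\<in>Sc c. \<Sum>j\<in>UNIV. c g h i j * x h j) + (\<lambda>i. \<Sum>h\<in>Sc c. \<Sum>j\<in>UNIV. c g h i j * y h j)"
      by (simp add: fun_eq_iff distrib_left sum.distrib)
  next
    fix a :: 'k and x :: "'g \<Rightarrow> 'n \<Rightarrow> 'k"
    show "(\<lambda>i. \<Sum>h\<in>Sc c. \<Sum>j\<in>UNIV. c g h i j * (a * x h j)) =
      (\<lambda>i. a * (\<Sum>h\<in>Sc c. \<Sum>j\<in>UNIV. c g h i j * x h j))"
      by (simp add: fun_eq_iff sum_distrib_left mult.left_commute)
  qed
  have eqn: "opc c = nuca (Sc c) s"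
  proof (intro ext)
    fix x g i
    show "opc c x g i = nuca (Sc c) s x g i"
      unfolding opc_def opH_def nuca_def s_def by (intro sum.cong refl) simp
  qed
  have fin: "finite (Sc c)" using assms by (simp add: good_def)
  have cst: "\<forall>g h. g \<notin> E \<longrightarrow> h \<notin> E \<longrightarrow> s g = s h"
  proof (intro allI impI)
    fix g h assume "g \<notin> E" "h \<notin> E"
    then have "c g = c h" using E(2) by blast
    then show "s g = s h" unfolding s_def by simp
  qed
  show ?thesis unfolding LNUCA_c_def
    apply (rule CollectI)
    apply (rule exI[of _ "Sc c"], rule exI[of _ s], rule exI[of _ E])
    apply (intro conjI)
        apply (rule fin)
       apply (rule allI, rule lin)
      apply (rule E(1))
     apply (rule cst)
    apply (rule eqn)
    done
qed




lemma opc_any: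
  assumes "finite H" "Sc c \<subseteq> H"
  shows "opc c x g i = (\<Sum>h\<in>H. \<Sum>j\<in>UNIV. c g h i j * x (g + h) j)"
  by (simp only: opH_eq[OF assms, symmetric] opH_def)

definition PP :: "('g::group_add \<Rightarrow> 'g \<Rightarrow> 'n \<Rightarrow> 'n \<Rightarrow> 'k::field) \<Rightarrow> ('g \<Rightarrow> 'g \<Rightarrow> 'n \<Rightarrow> 'n \<Rightarrow> 'k) \<Rightarrow> 'g set" where
  "PP c d = (\<lambda>(t, u). t + u) ` (Sc c \<times> Sc d)"

lemma Sc_cmp: "Sc (cmp c d) \<subseteq> PP c d"
proof
  fix h assume "h \<in> Sc (cmp c d)"
  then obtain g i j where "cmp c d g h i j \<noteq> 0" by (auto simp: Sc_def)
  then obtain t where t: "t \<in> Sc c" and "(\<Sum>l\<in>UNIV. c g t i l * d (g + t) (- t + h) l j) \<noteq> 0"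
    unfolding cmp_def by (meson sum.not_neutral_contains_not_neutral)
  then obtain l where "c g t i l * d (g + t) (- t + h) l j \<noteq> 0"
    by (meson sum.not_neutral_contains_not_neutral)
  then have "-t + h \<in> Sc d" by (auto simp: Sc_def)
  moreover have "h = t + (- t + h)" by (simp add: add.assoc[symmetric])
  ultimately show "h \<in> PP c d" unfolding PP_def using t by force
qed

lemma finite_PP: "good c \<Longrightarrow> good d \<Longrightarrow> finite (PP c d)"
  by (auto simp: PP_def good_def)

lemma good_E:
  assumes "good c"
  obtains E where "finite E" "\<And>g g'. g \<notin> E \<Longrightarrow> g' \<notin> E \<Longrightarrow> c g = c g'"
  using assms unfolding good_def by blast

lemma shift_notin:
  fixes g :: "'g::group_add"
  assumes "g \<notin> (\<Union>t\<in>T. (\<lambda>e. e + - t) ` F)" "t \<in> T"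
  shows "g + t \<notin> F"
proof
  assume "g + t \<in> F"
  moreover have "g = (g + t) + - t" by (simp only: add.assoc add.right_inverse add_0_right)
  ultimately show False using assms by blast
qed

lemma good_cmp:
  assumes c: "good c" and d: "good d"
  shows "good (cmp c d)"
proof -
  obtain Ec where Ec: "finite Ec" "\<And>g g'. g \<notin> Ec \<Longrightarrow> g' \<notin> Ec \<Longrightarrow> c g = c g'"
    using good_E[OF c] by blast
  obtain Ed where Ed: "finite Ed" "\<And>g g'. g \<notin> Ed \<Longrightarrow> g' \<notin> Ed \<Longrightarrow> d g = d g'"
    using good_E[OF d] by blast
  define E where "E = Ec \<union> (\<Union>t\<in>Sc c. (\<lambda>e. e + - t) ` Ed)"
  have fE: "finite E" using Ec(1) Ed(1) c by (auto simp: E_def good_def)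
  have "cmp c d g = cmp c d g'" if "g \<notin> E" "g' \<notin> E" for g g'
  proof -
    have cg: "c g = c g'" by (rule Ec(2)) (use that in \<open>auto simp: E_def\<close>)
    have "d (g + t) = d (g' + t)" if "t \<in> Sc c" for t
    proof -
      have g1: "g \<notin> (\<Union>t\<in>Sc c. (\<lambda>e. e + - t) ` Ed)" using \<open>g \<notin> E\<close> unfolding E_def by blast
      have g2: "g' \<notin> (\<Union>t\<in>Sc c. (\<lambda>e. e + - t) ` Ed)" using \<open>g' \<notin> E\<close> unfolding E_def by blast
      show ?thesis by (rule Ed(2)[OF shift_notin[OF g1 that] shift_notin[OF g2 that]])
    qed
    then show ?thesis unfolding cmp_def cg by (intro ext sum.cong refl) auto
  qed
  moreover have "finite (Sc (cmp c d))" using Sc_cmp finite_PP[OF c d] finite_subset by blast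
  ultimately show ?thesis unfolding good_def using fE by blast
qed

lemma swap4:
  "(\<Sum>t\<in>A. \<Sum>l\<in>B. \<Sum>h\<in>C. \<Sum>j\<in>D. F t l h j) = (\<Sum>h\<in>C. \<Sum>j\<in>D. \<Sum>t\<in>A. \<Sum>l\<in>B. F t l h j)"
proof -
  have "(\<Sum>t\<in>A. \<Sum>l\<in>B. \<Sum>h\<in>C. \<Sum>j\<in>D. F t l h j) = (\<Sum>t\<in>A. \<Sum>h\<in>C. \<Sum>l\<in>B. \<Sum>j\<in>D. F t l h j)"
    by (rule sum.cong[OF refl], rule sum.swap)
  also have "\<dots> = (\<Sum>t\<in>A. \<Sum>h\<in>C. \<Sum>j\<in>D. \<Sum>l\<in>B. F t l h j)"
    by (rule sum.cong[OF refl], rule sum.cong[OF refl], rule sum.swap)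
  also have "\<dots> = (\<Sum>h\<in>C. \<Sum>t\<in>A. \<Sum>j\<in>D. \<Sum>l\<in>B. F t l h j)"
    by (rule sum.swap)
  also have "\<dots> = (\<Sum>h\<in>C. \<Sum>j\<in>D. \<Sum>t\<in>A. \<Sum>l\<in>B. F t l h j)"
    by (rule sum.cong[OF refl], rule sum.swap)
  finally show ?thesis .
qed

lemma opc_cmp:
  assumes c: "good c" and d: "good d"
  shows "opc c \<circ> opc d = opc (cmp c d)"
proof (intro ext)
  fix x g i
  let ?P = "PP c d"
  have fP: "finite ?P" using finite_PP[OF c d] .
  have fc: "finite (Sc c)" using c by (simp add: good_def)
  have inner: "opc d x (g + t) l = (\<Sum>h\<in>?P. \<Sum>j\<in>UNIV. d (g + t) (- t + h) l j * x (g + h) j)"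
    if t: "t \<in> Sc c" for t l
  proof -
    have sub: "Sc d \<subseteq> (\<lambda>h. - t + h) ` ?P"
    proof
      fix u assume "u \<in> Sc d"
      then have "t + u \<in> ?P" using t by (force simp: PP_def)
      moreover have "u = - t + (t + u)" by (simp add: add.assoc[symmetric])
      ultimately show "u \<in> (\<lambda>h. - t + h) ` ?P" by blast
    qed
    have "opc d x (g + t) l = (\<Sum>u\<in>(\<lambda>h. - t + h) ` ?P. \<Sum>j\<in>UNIV. d (g + t) u l j * x (g + t + u) j)"
      by (rule opc_any[OF _ sub]) (use fP in simp)
    also have "\<dots> = (\<Sum>h\<in>?P. \<Sum>j\<in>UNIV. d (g + t) (- t + h) l j * x (g + t + (- t + h)) j)"
      by (subst sum.reindex) (auto simp: inj_on_def)
    also have "\<dots> = (\<Sum>h\<in>?P. \<Sum>j\<in>UNIV. d (g + t) (- t + h) l j * x (g + h) j)"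
      by (simp add: add.assoc[symmetric])
    finally show ?thesis .
  qed
  have "(opc c \<circ> opc d) x g i = (\<Sum>t\<in>Sc c. \<Sum>l\<in>UNIV. c g t i l * opc d x (g + t) l)"
    by (simp add: opc_def opH_def)
  also have "\<dots> = (\<Sum>t\<in>Sc c. \<Sum>l\<in>UNIV. \<Sum>h\<in>?P. \<Sum>j\<in>UNIV. c g t i l * (d (g + t) (- t + h) l j * x (g + h) j))"
    by (intro sum.cong refl) (simp add: inner sum_distrib_left)
  also have "\<dots> = (\<Sum>h\<in>?P. \<Sum>j\<in>UNIV. \<Sum>t\<in>Sc c. \<Sum>l\<in>UNIV. c g t i l * (d (g + t) (- t + h) l j * x (g + h) j))"
    by (rule swap4)
  also have "\<dots> = (\<Sum>h\<in>?P. \<Sum>j\<in>UNIV. cmp c d g h i j * x (g + h) j)"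
    unfolding cmp_def by (intro sum.cong refl) (simp add: sum_distrib_right mult.assoc)
  also have "\<dots> = opc (cmp c d) x g i"
    by (rule opc_any[symmetric, OF fP Sc_cmp])
  finally show "(opc c \<circ> opc d) x g i = opc (cmp c d) x g i" .
qed




lemma Sum_any_on:
  assumes "finite S" "\<And>t. t \<notin> S \<Longrightarrow> f t = 0"
  shows "Sum_any f = sum f S"
  by (rule Sum_any.expand_superset) (use assms in auto)

context
  fixes dummy :: "'g::group_add"
  assumes inf: "infinite (UNIV :: 'g set)"
begin

lemma cof_good:
  assumes "good (c :: 'g \<Rightarrow> 'g \<Rightarrow> 'n::finite \<Rightarrow> 'n \<Rightarrow> 'k::field)"
  obtains F where "finite F" "\<And>g. g \<notin> F \<Longrightarrow> c g = cof c"
  using good_cof[OF inf assms] by blast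

lemma cof_Sc:
  assumes "good (c :: 'g \<Rightarrow> 'g \<Rightarrow> 'n::finite \<Rightarrow> 'n \<Rightarrow> 'k::field)" "h \<notin> Sc c"
  shows "cof c h i j = 0"
proof -
  obtain F where F: "finite F" "\<And>g. g \<notin> F \<Longrightarrow> c g = cof c" using cof_good[OF assms(1)] by blast
  obtain g where "g \<notin> F" using inf F(1) by (metis ex_new_if_finite)
  then have "cof c = c g" using F by simp
  then show ?thesis using assms(2) by (simp add: notin_Sc)
qed

lemma Psi_MatD1:
  assumes "good (c :: 'g \<Rightarrow> 'g \<Rightarrow> 'n::finite \<Rightarrow> 'n \<Rightarrow> 'k::field)"
  shows "Psi c \<in> MatD1"
proof -
  obtain F where F: "finite F" "\<And>g. g \<notin> F \<Longrightarrow> c g = cof c" using cof_good[OF assms] by blast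
  have fS: "finite (Sc c)" using assms by (simp add: good_def)
  have "Psi c i j \<in> D1" for i j
  proof -
    have 1: "fin_supp (\<lambda>h. cof c h i j)"
      unfolding fin_supp_def
      by (rule finite_subset[OF _ fS]) (use cof_Sc[OF assms] in blast)
    have 2: "fin_supp (\<lambda>g h. c g h i j - cof c h i j)"
      unfolding fin_supp_def
      by (rule finite_subset[OF _ F(1)]) (use F(2) in \<open>auto simp: fun_eq_iff\<close>)
    have 3: "fin_supp (\<lambda>h. c g h i j - cof c h i j)" for g
      unfolding fin_supp_def
      by (rule finite_subset[OF _ fS]) (use cof_Sc[OF assms] notin_Sc in \<open>fastforce\<close>)
    show ?thesis using 1 2 3 by (simp add: Psi_def D1_def groupring_def groupring2_def)
  qed
  then show ?thesis by (simp add: MatD1_def)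
qed

lemma Psi_recover: "c g h i j = fst (Psi c i j) h + snd (Psi c i j) g h"
  by (simp add: Psi_def)

lemma Psi_inj: "Psi c = Psi d \<Longrightarrow> c = d"
  by (intro ext) (metis Psi_recover)

lemma Psi_surj:
  assumes A: "A \<in> (MatD1 :: ('n::finite \<Rightarrow> 'n \<Rightarrow> ('g \<Rightarrow> 'k::field) \<times> ('g \<Rightarrow> 'g \<Rightarrow> 'k)) set)"
  shows "\<exists>c. good c \<and> Psi c = A"
proof -
  define c where "c = (\<lambda>g h i j. fst (A i j) h + snd (A i j) g h)"
  have D: "fin_supp (fst (A i j))" "fin_supp (snd (A i j))" "fin_supp (snd (A i j) g)" for i j g
  proof -
    have "A i j \<in> D1" using A by (simp add: MatD1_def)
    then show "fin_supp (fst (A i j))" "fin_supp (snd (A i j))" "fin_supp (snd (A i j) g)"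
      by (auto simp: D1_def groupring_def groupring2_def mem_Times_iff)
  qed
  define E where "E = (\<Union>i j. {g. snd (A i j) g \<noteq> 0})"
  have fE: "finite E" unfolding E_def using D(2) by (auto simp: fin_supp_def)
  have SS: "Sc c \<subseteq> (\<Union>i j. {h. fst (A i j) h \<noteq> 0}) \<union> (\<Union>i j. \<Union>g\<in>{g. snd (A i j) g \<noteq> 0}. {h. snd (A i j) g h \<noteq> 0})"
  proof
    fix h assume "h \<in> Sc c"
    then obtain g i j where ne: "fst (A i j) h + snd (A i j) g h \<noteq> 0" by (auto simp: Sc_def c_def)
    show "h \<in> (\<Union>i j. {h. fst (A i j) h \<noteq> 0}) \<union> (\<Union>i j. \<Union>g\<in>{g. snd (A i j) g \<noteq> 0}. {h. snd (A i j) g h \<noteq> 0})"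
    proof (cases "snd (A i j) g h = 0")
      case True then show ?thesis using ne by auto
    next
      case False
      then have "snd (A i j) g \<noteq> 0" by auto
      then show ?thesis using False by blast
    qed
  qed
  have fS: "finite (Sc c)"
    by (rule finite_subset[OF SS]) (use D in \<open>auto simp: fin_supp_def\<close>)
  have cE: "c g = (\<lambda>h i j. fst (A i j) h)" if "g \<notin> E" for g
    using that by (auto simp: c_def E_def fun_eq_iff)
  have good: "good c" unfolding good_def
  proof (intro conjI exI[of _ E] allI impI)
    fix g g' assume "g \<notin> E" "g' \<notin> E"
    then show "c g = c g'" using cE by metis
  qed (use fS fE in auto)
  have "cof c = (\<lambda>h i j. fst (A i j) h)"
    by (rule cof_eq[OF inf], rule finite_subset[OF _ fE]) (use cE in auto)
  then have "Psi c = A" by (auto simp: Psi_def c_def fun_eq_iff prod_eq_iff)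
  then show ?thesis using good by blast
qed

lemma Psi_add:
  assumes c: "good (c :: 'g \<Rightarrow> 'g \<Rightarrow> 'n::finite \<Rightarrow> 'n \<Rightarrow> 'k::field)" and d: "good d"
  shows "Psi (c + d) = Psi c + Psi d"
proof -
  obtain F where F: "finite F" "\<And>g. g \<notin> F \<Longrightarrow> c g = cof c" using cof_good[OF c] by blast
  obtain F' where F': "finite F'" "\<And>g. g \<notin> F' \<Longrightarrow> d g = cof d" using cof_good[OF d] by blast
  have "cof (c + d) = cof c + cof d"
    by (rule cof_eq[OF inf], rule finite_subset[of _ "F \<union> F'"]) (use F F' in auto)
  then show ?thesis by (simp add: Psi_def fun_eq_iff)
qed

lemma Psi_cmp:
  assumes c: "good (c :: 'g \<Rightarrow> 'g \<Rightarrow> 'n::finite \<Rightarrow> 'n \<Rightarrow> 'k::field)" and d: "good d"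
  shows "Psi (cmp c d) = mat_mul (Psi c) (Psi d)"
proof -
  obtain F where F: "finite F" "\<And>g. g \<notin> F \<Longrightarrow> c g = cof c" using cof_good[OF c] by blast
  obtain F' where F': "finite F'" "\<And>g. g \<notin> F' \<Longrightarrow> d g = cof d" using cof_good[OF d] by blast
  have fS: "finite (Sc c)" using c by (simp add: good_def)
  define a where "a = cof c"
  define b where "b = cof d"
  define V where "V = (\<lambda>h i j. \<Sum>t\<in>Sc c. \<Sum>l\<in>UNIV. a t i l * b (- t + h) l j)"
  have cofV: "cof (cmp c d) = V"
  proof (rule cof_eq[OF inf], rule finite_subset)
    show "finite (F \<union> (\<Union>t\<in>Sc c. (\<lambda>e. e + - t) ` F'))" using F(1) F'(1) fS by blast
    show "{g. cmp c d g \<noteq> V} \<subseteq> F \<union> (\<Union>t\<in>Sc c. (\<lambda>e. e + - t) ` F')"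
    proof
      fix g assume g: "g \<in> {g. cmp c d g \<noteq> V}"
      show "g \<in> F \<union> (\<Union>t\<in>Sc c. (\<lambda>e. e + - t) ` F')"
      proof (rule ccontr)
        assume ng: "g \<notin> F \<union> (\<Union>t\<in>Sc c. (\<lambda>e. e + - t) ` F')"
        then have "c g = a" using F(2) by (auto simp: a_def)
        moreover have "d (g + t) = b" if "t \<in> Sc c" for t
        proof -
          have g1: "g \<notin> (\<Union>t\<in>Sc c. (\<lambda>e. e + - t) ` F')" using ng by blast
          show ?thesis unfolding b_def by (rule F'(2)[OF shift_notin[OF g1 that]])
        qed
        ultimately have "cmp c d g = V" unfolding cmp_def V_def by (intro ext sum.cong refl) auto
        then show False using g by simp
      qed
    qed
  qed
  have a_Sc: "t \<notin> Sc c \<Longrightarrow> a t i l = 0" for t i l using cof_Sc[OF c] by (simp add: a_def)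
  show ?thesis
  proof (rule ext, rule ext, rule prod_eqI)
    fix i j
    show "fst (Psi (cmp c d) i j) = fst (mat_mul (Psi c) (Psi d) i j)"
    proof (intro ext)
      fix h
      have "fst (mat_mul (Psi c) (Psi d) i j) h = (\<Sum>l\<in>UNIV. \<Sum>t\<in>Sc c. a t i l * b (- t + h) l j)"
        unfolding mat_mul_def fst_sum sum_fun_app
        by (intro sum.cong refl) (simp add: d1_mul_def Psi_def gr_mul_def a_def[symmetric] b_def[symmetric], rule Sum_any_on[OF fS], simp add: a_Sc)
      also have "\<dots> = V h i j" unfolding V_def by (rule sum.swap)
      finally show "fst (Psi (cmp c d) i j) h = fst (mat_mul (Psi c) (Psi d) i j) h"
        by (simp add: Psi_def cofV)
    qed
    show "snd (Psi (cmp c d) i j) = snd (mat_mul (Psi c) (Psi d) i j)"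
    proof (intro ext)
      fix g h
      have "snd (mat_mul (Psi c) (Psi d) i j) g h =
          (\<Sum>l\<in>UNIV. \<Sum>t\<in>Sc c. c g t i l * d (g + t) (- t + h) l j - a t i l * b (- t + h) l j)"
        unfolding mat_mul_def snd_sum sum_fun_app
      proof (intro sum.cong refl)
        fix l
        have e1: "tw_lr (\<lambda>h. a h i l) (\<lambda>g h. d g h l j - b h l j) g h
            = (\<Sum>t\<in>Sc c. a t i l * (d (g + t) (- t + h) l j - b (- t + h) l j))"
          unfolding tw_lr_def by (rule Sum_any_on[OF fS]) (simp add: a_Sc)
        have e2: "tw_rl (\<lambda>g h. c g h i l - a h i l) (\<lambda>h. b h l j) g h
            = (\<Sum>t\<in>Sc c. (c g t i l - a t i l) * b (- t + h) l j)"
          unfolding tw_rl_def by (rule Sum_any_on[OF fS]) (simp add: a_Sc notin_Sc)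
        have e3: "tw_rr (\<lambda>g h. c g h i l - a h i l) (\<lambda>g h. d g h l j - b h l j) g h
            = (\<Sum>t\<in>Sc c. (c g t i l - a t i l) * (d (g + t) (- t + h) l j - b (- t + h) l j))"
          unfolding tw_rr_def by (rule Sum_any_on[OF fS]) (simp add: a_Sc notin_Sc)
        have "snd (d1_mul (Psi c i l) (Psi d l j)) g h =
           tw_lr (\<lambda>h. a h i l) (\<lambda>g h. d g h l j - b h l j) g h
         + tw_rl (\<lambda>g h. c g h i l - a h i l) (\<lambda>h. b h l j) g h
         + tw_rr (\<lambda>g h. c g h i l - a h i l) (\<lambda>g h. d g h l j - b h l j) g h"
          by (simp add: d1_mul_def Psi_def a_def b_def)
        also have "\<dots> = (\<Sum>t\<in>Sc c. c g t i l * d (g + t) (- t + h) l j - a t i l * b (- t + h) l j)"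
          unfolding e1 e2 e3 sum.distrib[symmetric] by (intro sum.cong refl) (simp add: algebra_simps)
        finally show "snd (d1_mul (Psi c i l) (Psi d l j)) g h =
           (\<Sum>t\<in>Sc c. c g t i l * d (g + t) (- t + h) l j - a t i l * b (- t + h) l j)" .
      qed
      also have "\<dots> = cmp c d g h i j - V h i j"
        unfolding cmp_def V_def sum_subtractf[symmetric] by (rule sum.swap)
      finally show "snd (Psi (cmp c d) i j) g h = snd (mat_mul (Psi c) (Psi d) i j) g h"
        by (simp add: Psi_def cofV)
    qed
  qed
qed

end




theorem theoremA:
  assumes "infinite (UNIV :: 'g::group_add set)"
  shows "\<exists>\<Phi>. bij_betw \<Phi> (LNUCA_c :: (('g \<Rightarrow> 'n::finite \<Rightarrow> 'k::field) \<Rightarrow> ('g \<Rightarrow> 'n \<Rightarrow> 'k)) set)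
                       (MatD1 :: ('n \<Rightarrow> 'n \<Rightarrow> ('g \<Rightarrow> 'k) \<times> ('g \<Rightarrow> 'g \<Rightarrow> 'k)) set)
          \<and> (\<forall>\<tau>\<in>LNUCA_c. \<forall>\<rho>\<in>LNUCA_c.
                \<Phi> (\<tau> + \<rho>) = \<Phi> \<tau> + \<Phi> \<rho> \<and> \<Phi> (\<tau> \<circ> \<rho>) = mat_mul (\<Phi> \<tau>) (\<Phi> \<rho>))
          \<and> \<Phi> id = mat_one"
proof -
  let ?L = "LNUCA_c :: (('g \<Rightarrow> 'n::finite \<Rightarrow> 'k::field) \<Rightarrow> ('g \<Rightarrow> 'n \<Rightarrow> 'k)) set"
  let ?M = "MatD1 :: ('n \<Rightarrow> 'n \<Rightarrow> ('g \<Rightarrow> 'k) \<times> ('g \<Rightarrow> 'g \<Rightarrow> 'k)) set"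
  define \<Phi> :: "(('g \<Rightarrow> 'n \<Rightarrow> 'k) \<Rightarrow> ('g \<Rightarrow> 'n \<Rightarrow> 'k)) \<Rightarrow> _" where "\<Phi> = (\<lambda>\<tau>. Psi (coef \<tau>))"
  have inj: "inj_on \<Phi> ?L"
  proof (rule inj_onI)
    fix \<tau> \<rho> assume t: "\<tau> \<in> ?L" and r: "\<rho> \<in> ?L" and e: "\<Phi> \<tau> = \<Phi> \<rho>"
    have "coef \<tau> = coef \<rho>" using e unfolding \<Phi>_def by (rule Psi_inj[OF assms])
    then show "\<tau> = \<rho>" using LNUCA_rep[OF t] LNUCA_rep[OF r] by metis
  qed
  have img: "\<Phi> ` ?L = ?M"
  proof
    show "\<Phi> ` ?L \<subseteq> ?M"
      using LNUCA_rep Psi_MatD1[OF assms] unfolding \<Phi>_def by blast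
    show "?M \<subseteq> \<Phi> ` ?L"
    proof
      fix A assume "A \<in> ?M"
      then obtain c where c: "good c" "Psi c = A" using Psi_surj[OF assms] by blast
      have "opc c \<in> ?L" by (rule opc_LNUCA[OF c(1)])
      moreover have "\<Phi> (opc c) = A"
        unfolding \<Phi>_def using coef_opc c by (metis good_def)
      ultimately show "A \<in> \<Phi> ` ?L" by (metis image_eqI)
    qed
  qed
  have ops: "\<Phi> (\<tau> + \<rho>) = \<Phi> \<tau> + \<Phi> \<rho> \<and> \<Phi> (\<tau> \<circ> \<rho>) = mat_mul (\<Phi> \<tau>) (\<Phi> \<rho>)"
    if t: "\<tau> \<in> ?L" and r: "\<rho> \<in> ?L" for \<tau> \<rho>
  proof
    have gt: "good (coef \<tau>)" and et: "\<tau> = opc (coef \<tau>)" using LNUCA_rep[OF t] by auto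
    have gr: "good (coef \<rho>)" and er: "\<rho> = opc (coef \<rho>)" using LNUCA_rep[OF r] by auto
    have "coef (\<tau> + \<rho>) = coef \<tau> + coef \<rho>" by (simp add: coef_def fun_eq_iff)
    then show "\<Phi> (\<tau> + \<rho>) = \<Phi> \<tau> + \<Phi> \<rho>" unfolding \<Phi>_def using Psi_add[OF assms gt gr] by simp
    have gc: "good (cmp (coef \<tau>) (coef \<rho>))" by (rule good_cmp[OF gt gr])
    have "\<tau> \<circ> \<rho> = opc (cmp (coef \<tau>) (coef \<rho>))"
      using opc_cmp[OF gt gr] et er by metis
    then have "coef (\<tau> \<circ> \<rho>) = cmp (coef \<tau>) (coef \<rho>)"
      using coef_opc gc by (metis good_def)
    then show "\<Phi> (\<tau> \<circ> \<rho>) = mat_mul (\<Phi> \<tau>) (\<Phi> \<rho>)"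
      unfolding \<Phi>_def using Psi_cmp[OF assms gt gr] by simp
  qed
  define I :: "'g \<Rightarrow> 'g \<Rightarrow> 'n \<Rightarrow> 'n \<Rightarrow> 'k" where "I = (\<lambda>g h i j. if h = 0 \<and> i = j then 1 else 0)"
  have cid: "coef (id :: ('g \<Rightarrow> 'n \<Rightarrow> 'k) \<Rightarrow> _) = I"
  proof -
    have "(g = g + h) = (h = 0)" for g h :: 'g by (metis add.right_neutral add_left_cancel)
    then show ?thesis by (simp add: coef_def I_def fun_eq_iff)
  qed
  have cofI: "cof I = (\<lambda>h i j. if h = 0 \<and> i = j then 1 else 0)"
    by (rule cof_eq[OF assms]) (simp add: I_def)
  have "Psi I = mat_one"
  proof (rule ext, rule ext)
    fix i j :: 'n
    show "Psi I i j = mat_one i j"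
      unfolding Psi_def cofI
      by (cases "i = j") (auto simp: I_def mat_one_def d1_one_def fun_eq_iff zero_prod_def)
  qed
  then have "\<Phi> id = mat_one" unfolding \<Phi>_def cid .
  then show ?thesis using inj img ops unfolding bij_betw_def by blast
qed


end
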